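(* Let $k$ be a positive-definite kernel on $\mathcal X$ and $l$ a positive-definite kernel on $\mathcal Y$ with $\sup_xk(x,x)\le\nu_k$ and $\sup_yl(y,y)\le\nu_l$. Then $|\mathbb E\hat\sigma^2-\sigma^2|\le\frac{4608\nu_k^2\nu_l^2}{n}$.
   Context: $(X_1,Y_1),\dots,(X_n,Y_n)$, $n\ge4$, i.i.d. from $P_{xy}$. $K_{ab}=k(X_a,X_b)$, $L_{ab}=l(Y_a,Y_b)$, and for distinct indices $H_{ijqr}=\frac1{24}\sum_{(a,b,c,d)}K_{ab}(L_{ab}+L_{cd}-2L_{ac})$ over all $24$ orderings of $\{i,j,q,r\}$. With $(n)_k=n!/(n-k)!$, $\mathbf i^n_k$ the $k$-tuples of distinct elements of $\{1,\dots,n\}$, $\mathbf i^n_3\setminus\{i\}$ those avoiding $i$: $\hat\eta=\frac1{(n)_4}\sum_{\mathbf i^n_4}H_{ijqr}$, $\eta=\mathbb E[H_{1234}]$, $\sigma^2=16(\mathbb E[H_{1234}H_{1567}]-\eta^2)$ (indices referring to i.i.d. samples), and $\hat\sigma^2=16\Bigl(\frac1{(n)_4(n-1)_3}\sum_{(i,j,q,r)\in\mathbf i^n_4}\sum_{(b,c,d)\in\mathbf i^n_3\setminus\{i\}}H_{ijqr}H_{ibcd}-\hat\eta^2\Bigr)$. *)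

theory Defs
  imports "HOL-Probability.Probability" "HOL-Combinatorics.Multiset_Permutations"
begin

definition pd_kernel :: "('a \<Rightarrow> 'a \<Rightarrow> real) \<Rightarrow> bool" where
  "pd_kernel k \<longleftrightarrow> (\<forall>x y. k x y = k y x) \<and>
     (\<forall>(xs :: 'a list) (c :: nat \<Rightarrow> real).
        (\<Sum>i<length xs. \<Sum>j<length xs. c i * c j * k (xs ! i) (xs ! j)) \<ge> 0)"

definition falling :: "nat \<Rightarrow> nat \<Rightarrow> real" where
  "falling n k = fact n / fact (n - k)"

definition tuples :: "nat \<Rightarrow> nat \<Rightarrow> nat list set" where
  "tuples n k = {xs. length xs = k \<and> distinct xs \<and> set xs \<subseteq> {1..n}}"

definition hterm :: "('x \<Rightarrow> 'x \<Rightarrow> real) \<Rightarrow> ('y \<Rightarrow> 'y \<Rightarrow> real) \<Rightarrow> (nat \<Rightarrow> 'x \<times> 'y)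
     \<Rightarrow> nat \<Rightarrow> nat \<Rightarrow> nat \<Rightarrow> nat \<Rightarrow> real" where
  "hterm k l z a b c d =
     k (fst (z a)) (fst (z b)) *
       (l (snd (z a)) (snd (z b)) + l (snd (z c)) (snd (z d)) - 2 * l (snd (z a)) (snd (z c)))"

definition H :: "('x \<Rightarrow> 'x \<Rightarrow> real) \<Rightarrow> ('y \<Rightarrow> 'y \<Rightarrow> real) \<Rightarrow> (nat \<Rightarrow> 'x \<times> 'y)
     \<Rightarrow> nat \<Rightarrow> nat \<Rightarrow> nat \<Rightarrow> nat \<Rightarrow> real" where
  "H k l z i j q r = (1 / 24) *
     (\<Sum>p\<in>permutations_of_set {i, j, q, r}. hterm k l z (p ! 0) (p ! 1) (p ! 2) (p ! 3))"

definition eta_hat :: "('x \<Rightarrow> 'x \<Rightarrow> real) \<Rightarrow> ('y \<Rightarrow> 'y \<Rightarrow> real) \<Rightarrow> nat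
     \<Rightarrow> (nat \<Rightarrow> 'x \<times> 'y) \<Rightarrow> real" where
  "eta_hat k l n z = (1 / falling n 4) *
     (\<Sum>t\<in>tuples n 4. H k l z (t ! 0) (t ! 1) (t ! 2) (t ! 3))"

definition sigma2_hat :: "('x \<Rightarrow> 'x \<Rightarrow> real) \<Rightarrow> ('y \<Rightarrow> 'y \<Rightarrow> real) \<Rightarrow> nat
     \<Rightarrow> (nat \<Rightarrow> 'x \<times> 'y) \<Rightarrow> real" where
  "sigma2_hat k l n z = 16 *
     ((1 / (falling n 4 * falling (n - 1) 3)) *
        (\<Sum>t\<in>tuples n 4. \<Sum>s\<in>{s\<in>tuples n 3. t ! 0 \<notin> set s}.
           H k l z (t ! 0) (t ! 1) (t ! 2) (t ! 3) * H k l z (t ! 0) (s ! 0) (s ! 1) (s ! 2))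
      - (eta_hat k l n z)\<^sup>2)"

definition eta :: "('x \<times> 'y) measure \<Rightarrow> ('x \<Rightarrow> 'x \<Rightarrow> real) \<Rightarrow> ('y \<Rightarrow> 'y \<Rightarrow> real) \<Rightarrow> real" where
  "eta P k l = (\<integral>z. H k l z 1 2 3 4 \<partial>(PiM {1..7} (\<lambda>_. P)))"

definition sigma2 :: "('x \<times> 'y) measure \<Rightarrow> ('x \<Rightarrow> 'x \<Rightarrow> real) \<Rightarrow> ('y \<Rightarrow> 'y \<Rightarrow> real) \<Rightarrow> real" where
  "sigma2 P k l = 16 * ((\<integral>z. H k l z 1 2 3 4 * H k l z 1 5 6 7 \<partial>(PiM {1..7} (\<lambda>_. P)))
                        - (eta P k l)\<^sup>2)"

end

theory Submission
  imports Defs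
begin

lemma sum_perms_rec:
  assumes "finite A" "A \<noteq> {}"
  shows "(\<Sum>p\<in>permutations_of_set A. f p) = (\<Sum>a\<in>A. \<Sum>p\<in>permutations_of_set (A - {a}). f (a # p))"
proof -
  have "(\<Sum>p\<in>permutations_of_set A. f p) = (\<Sum>p\<in>(\<Union>x\<in>A. (\<lambda>xs. x # xs) ` permutations_of_set (A - {x})). f p)"
    using permutations_of_set_nonempty[OF assms(2)] by simp
  also have "\<dots> = (\<Sum>a\<in>A. \<Sum>p\<in>(\<lambda>xs. a # xs) ` permutations_of_set (A - {a}). f p)"
    by (rule sum.UNION_disjoint) (use assms in auto)
  also have "\<dots> = (\<Sum>a\<in>A. \<Sum>p\<in>permutations_of_set (A - {a}). f (a # p))"
    by (rule sum.cong[OF refl]) (simp add: sum.reindex inj_on_def)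
  finally show ?thesis .
qed

lemma perms2: "a \<noteq> b \<Longrightarrow> (\<Sum>p\<in>permutations_of_set {a,b}. f p) = f [a,b] + f [b,a]"
  by (simp add: permutations_of_set_doubleton)

lemma perms3:
  assumes "distinct [a,b,c]"
  shows "(\<Sum>p\<in>permutations_of_set {a,b,c}. f p) = f [a,b,c] + f [a,c,b] + f [b,a,c] + f [b,c,a] + f [c,a,b] + f [c,b,a]"
proof -
  have e: "{a,b,c} - {a} = {b,c}" "{a,b,c} - {b} = {a,c}" "{a,b,c} - {c} = {a,b}" using assms by auto
  show ?thesis using assms
    by (subst sum_perms_rec) (simp_all add: e perms2 ac_simps)
qed

lemma perms4:
  assumes "distinct [a,b,c,d]"
  shows "(\<Sum>p\<in>permutations_of_set {a,b,c,d}. f p) =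
    f [a,b,c,d] + f [a,b,d,c] + f [a,c,b,d] + f [a,c,d,b] + f [a,d,b,c] + f [a,d,c,b] +
    f [b,a,c,d] + f [b,a,d,c] + f [b,c,a,d] + f [b,c,d,a] + f [b,d,a,c] + f [b,d,c,a] +
    f [c,a,b,d] + f [c,a,d,b] + f [c,b,a,d] + f [c,b,d,a] + f [c,d,a,b] + f [c,d,b,a] +
    f [d,a,b,c] + f [d,a,c,b] + f [d,b,a,c] + f [d,b,c,a] + f [d,c,a,b] + f [d,c,b,a]"
proof -
  have e: "{a,b,c,d} - {a} = {b,c,d}" "{a,b,c,d} - {b} = {a,c,d}" "{a,b,c,d} - {c} = {a,b,d}"
     "{a,b,c,d} - {d} = {a,b,c}" using assms by auto
  show ?thesis using assms
    by (subst sum_perms_rec) (simp_all add: e perms3 ac_simps)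
qed

lemma pd_sym: "pd_kernel k \<Longrightarrow> k x y = k y x"
  unfolding pd_kernel_def by blast

lemma pd4:
  assumes "pd_kernel k"
  shows "0 \<le> cA*cA*k xa xa + cA*cB*k xa xb + cA*cC*k xa xc + cA*cD*k xa xd
           + cB*cA*k xb xa + cB*cB*k xb xb + cB*cC*k xb xc + cB*cD*k xb xd
           + cC*cA*k xc xa + cC*cB*k xc xb + cC*cC*k xc xc + cC*cD*k xc xd
           + cD*cA*k xd xa + cD*cB*k xd xb + cD*cC*k xd xc + cD*cD*k xd xd"
proof -
  have "0 \<le> (\<Sum>i<length [xa,xb,xc,xd]. \<Sum>j<length [xa,xb,xc,xd]. [cA,cB,cC,cD] ! i * [cA,cB,cC,cD] ! j * k ([xa,xb,xc,xd] ! i) ([xa,xb,xc,xd] ! j))"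
    using assms unfolding pd_kernel_def by blast
  then show ?thesis by (simp add: numeral_eq_Suc sum.lessThan_Suc algebra_simps)
qed

lemma pd_diag: "pd_kernel k \<Longrightarrow> 0 \<le> k x x"
  using pd4[where cA=1 and cB=0 and cC=0 and cD=0 and xa=x and xb=x and xc=x and xd=x] by simp

lemma pd_bound:
  assumes "pd_kernel k" "\<forall>x. k x x \<le> \<nu>"
  shows "\<bar>k x y\<bar> \<le> \<nu>"
proof -
  have s: "k y x = k x y" using pd_sym[OF assms(1)] by blast
  have 1: "0 \<le> k x x + k y y + 2 * k x y" using pd4[OF assms(1), where cA=1 and cB=1 and cC=0 and cD=0 and xa=x and xb=y and xc=x and xd=x] s by simp
  have 2: "0 \<le> k x x + k y y - 2 * k x y" using pd4[OF assms(1), where cA=1 and cB="-1" and cC=0 and cD=0 and xa=x and xb=y and xc=x and xd=x] s by simp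
  show ?thesis using 1 2 assms(2) spec[OF assms(2), of x] spec[OF assms(2), of y] by linarith
qed

definition xk :: "('x \<Rightarrow> 'x \<Rightarrow> real) \<Rightarrow> 'x \<Rightarrow> 'x \<Rightarrow> 'x \<Rightarrow> 'x \<Rightarrow> real" where
  "xk k a b c d = k a c - k a d - k b c + k b d"

lemma xk_bound:
  assumes "pd_kernel k" "\<forall>x. k x x \<le> \<nu>"
  shows "\<bar>xk k a b c d\<bar> \<le> 4 * \<nu>"
proof -
  have s: "\<And>x y. k y x = k x y" using pd_sym[OF assms(1)] by blast
  have 1: "0 \<le> k a a + k b b + k c c + k d d - 2 * k a b - 2 * k c d + 2 * xk k a b c d"
    using pd4[OF assms(1), where cA=1 and cB="-1" and cC=1 and cD="-1" and xa=a and xb=b and xc=c and xd=d] s unfolding xk_def by (simp add: algebra_simps)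
  have 2: "0 \<le> k a a + k b b + k c c + k d d - 2 * k a b - 2 * k c d - 2 * xk k a b c d"
    using pd4[OF assms(1), where cA=1 and cB="-1" and cC="-1" and cD=1 and xa=a and xb=b and xc=c and xd=d] s unfolding xk_def by (simp add: algebra_simps)
  have "\<bar>k a b\<bar> \<le> \<nu>" "\<bar>k c d\<bar> \<le> \<nu>" using pd_bound[OF assms] by auto
  then show ?thesis using 1 2 spec[OF assms(2), of a] spec[OF assms(2), of b] spec[OF assms(2), of c]
     spec[OF assms(2), of d] by linarith
qed

lemma hex:
  fixes x1 x3 y1 y3 a b :: real
  assumes "\<bar>x1\<bar> \<le> a" "\<bar>x3\<bar> \<le> a" "\<bar>x1 + x3\<bar> \<le> a" "\<bar>y1\<bar> \<le> b" "\<bar>y3\<bar> \<le> b" "\<bar>y1 + y3\<bar> \<le> b"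
  shows "\<bar>x1 * y1 + (x1 + x3) * (y1 + y3) + x3 * y3\<bar> \<le> 2 * a * b"
proof -
  have sx: "\<bar>x1\<bar> + \<bar>x1 + x3\<bar> + \<bar>x3\<bar> \<le> 2 * a" using assms(1-3) by arith
  have tri: "\<bar>p + q + r\<bar> \<le> \<bar>p\<bar> + \<bar>q\<bar> + \<bar>r\<bar>" for p q r :: real by arith
  have "\<bar>x1 * y1 + (x1 + x3) * (y1 + y3) + x3 * y3\<bar> \<le> \<bar>x1\<bar> * \<bar>y1\<bar> + \<bar>x1 + x3\<bar> * \<bar>y1 + y3\<bar> + \<bar>x3\<bar> * \<bar>y3\<bar>"
    using tri[of "x1 * y1" "(x1 + x3) * (y1 + y3)" "x3 * y3"] by (simp add: abs_mult)
  also have "\<dots> \<le> \<bar>x1\<bar> * b + \<bar>x1 + x3\<bar> * b + \<bar>x3\<bar> * b"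
    by (intro add_mono mult_left_mono) (use assms in auto)
  also have "\<dots> = (\<bar>x1\<bar> + \<bar>x1 + x3\<bar> + \<bar>x3\<bar>) * b" by (simp add: algebra_simps)
  also have "\<dots> \<le> 2 * a * b" using sx assms(4) by (intro mult_right_mono) auto
  finally show ?thesis .
qed

definition Hf :: "('x \<Rightarrow> 'x \<Rightarrow> real) \<Rightarrow> ('y \<Rightarrow> 'y \<Rightarrow> real) \<Rightarrow> 'x \<times> 'y \<Rightarrow> 'x \<times> 'y \<Rightarrow> 'x \<times> 'y \<Rightarrow> 'x \<times> 'y \<Rightarrow> real" where
  "Hf k l u0 u1 u2 u3 = (1/12) *
     (xk k (fst u0) (fst u1) (fst u2) (fst u3) * xk l (snd u0) (snd u1) (snd u2) (snd u3)
    + xk k (fst u0) (fst u2) (fst u1) (fst u3) * xk l (snd u0) (snd u2) (snd u1) (snd u3)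
    + xk k (fst u0) (fst u3) (fst u1) (fst u2) * xk l (snd u0) (snd u3) (snd u1) (snd u2))"

lemma Hf_bound:
  assumes "pd_kernel k" "pd_kernel l" "\<forall>x. k x x \<le> \<nu>k" "\<forall>y. l y y \<le> \<nu>l"
  shows "\<bar>Hf k l u0 u1 u2 u3\<bar> \<le> 8/3 * \<nu>k * \<nu>l"
proof -
  have sk: "\<And>x y. k y x = k x y" using pd_sym[OF assms(1)] by blast
  have sl: "\<And>x y. l y x = l x y" using pd_sym[OF assms(2)] by blast
  define x1 where "x1 = xk k (fst u0) (fst u1) (fst u2) (fst u3)"
  define x3 where "x3 = xk k (fst u0) (fst u3) (fst u1) (fst u2)"
  define y1 where "y1 = xk l (snd u0) (snd u1) (snd u2) (snd u3)"
  define y3 where "y3 = xk l (snd u0) (snd u3) (snd u1) (snd u2)"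
  have ex: "xk k (fst u0) (fst u2) (fst u1) (fst u3) = x1 + x3"
    unfolding x1_def x3_def xk_def using sk by (simp add: algebra_simps)
  have ey: "xk l (snd u0) (snd u2) (snd u1) (snd u3) = y1 + y3"
    unfolding y1_def y3_def xk_def using sl by (simp add: algebra_simps)
  have b3: "\<bar>x1+x3\<bar> \<le> 4*\<nu>k"
    using xk_bound[OF assms(1,3), of "fst u0" "fst u2" "fst u1" "fst u3"] ex by simp
  have b6: "\<bar>y1+y3\<bar> \<le> 4*\<nu>l"
    using xk_bound[OF assms(2,4), of "snd u0" "snd u2" "snd u1" "snd u3"] ey by simp
  have b: "\<bar>x1\<bar> \<le> 4*\<nu>k" "\<bar>x3\<bar> \<le> 4*\<nu>k" "\<bar>x1+x3\<bar> \<le> 4*\<nu>k"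
          "\<bar>y1\<bar> \<le> 4*\<nu>l" "\<bar>y3\<bar> \<le> 4*\<nu>l" "\<bar>y1+y3\<bar> \<le> 4*\<nu>l"
    using b3 b6 unfolding x1_def x3_def y1_def y3_def
    using xk_bound[OF assms(1,3)] xk_bound[OF assms(2,4)] by auto
  have "Hf k l u0 u1 u2 u3 = (1/12) * (x1 * y1 + (x1 + x3) * (y1 + y3) + x3 * y3)"
    unfolding Hf_def ex ey x1_def x3_def y1_def y3_def by simp
  moreover have "\<bar>x1 * y1 + (x1 + x3) * (y1 + y3) + x3 * y3\<bar> \<le> 2 * (4*\<nu>k) * (4*\<nu>l)"
    by (rule hex[OF b])
  ultimately show ?thesis by simp
qed

lemma H_formula:
  assumes "pd_kernel k" "pd_kernel l" "distinct [i,j,q,r]"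
  shows "H k l z i j q r = Hf k l (z i) (z j) (z q) (z r)"
proof -
  have sk: "\<And>x y. k y x = k x y" using pd_sym[OF assms(1)] by blast
  have sl: "\<And>x y. l y x = l x y" using pd_sym[OF assms(2)] by blast
  show ?thesis
    unfolding H_def perms4[OF assms(3)] Hf_def xk_def hterm_def
    apply (simp only: numeral_2_eq_2 numeral_3_eq_3 One_nat_def nth_Cons_0 nth_Cons_Suc)
    apply (simp only: sk sl)
    apply algebra
    done
qed

lemma meas_g:
  assumes "(\<lambda>(a, b). g a b) \<in> borel_measurable (P \<Otimes>\<^sub>M P)" "a \<in> I" "b \<in> I"
  shows "(\<lambda>z. g (z a) (z b) :: real) \<in> borel_measurable (PiM I (\<lambda>_. P))"
proof -
  have "(\<lambda>z. (z a, z b)) \<in> measurable (PiM I (\<lambda>_. P)) (P \<Otimes>\<^sub>M P)"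
    using assms(2,3) by (intro measurable_Pair measurable_component_singleton) auto
  from measurable_compose[OF this assms(1)] show ?thesis by simp
qed

lemma Hf_meas:
  assumes km: "(\<lambda>(a, b). k (fst a) (fst b)) \<in> borel_measurable (P \<Otimes>\<^sub>M P)"
    and lm: "(\<lambda>(a, b). l (snd a) (snd b)) \<in> borel_measurable (P \<Otimes>\<^sub>M P)"
    and I: "a \<in> I" "b \<in> I" "c \<in> I" "d \<in> I"
  shows "(\<lambda>z. Hf k l (z a) (z b) (z c) (z d)) \<in> borel_measurable (PiM I (\<lambda>_. P))"
proof -
  have K: "(\<lambda>z. k (fst (z u)) (fst (z v))) \<in> borel_measurable (PiM I (\<lambda>_. P))" if "u \<in> I" "v \<in> I" for u v
    using meas_g[where g="\<lambda>a b. k (fst a) (fst b)", OF km that] by simp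
  have L: "(\<lambda>z. l (snd (z u)) (snd (z v))) \<in> borel_measurable (PiM I (\<lambda>_. P))" if "u \<in> I" "v \<in> I" for u v
    using meas_g[where g="\<lambda>a b. l (snd a) (snd b)", OF lm that] by simp
  show ?thesis unfolding Hf_def xk_def
    by (intro borel_measurable_times borel_measurable_add borel_measurable_diff borel_measurable_const K L I)
qed

lemma int_reindex:
  fixes G :: "(nat \<Rightarrow> 'a) \<Rightarrow> real"
  assumes P: "prob_space P" and f: "inj_on f J" "f \<in> J \<rightarrow> I"
    and G: "G \<in> borel_measurable (PiM J (\<lambda>_. P))"
  shows "(\<integral>z. G (\<lambda>j\<in>J. z (f j)) \<partial>PiM I (\<lambda>_. P)) = (\<integral>w. G w \<partial>PiM J (\<lambda>_. P))"
proof -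
  have m: "(\<lambda>z. \<lambda>j\<in>J. z (f j)) \<in> measurable (PiM I (\<lambda>_. P)) (PiM J (\<lambda>_. P))"
    using f(2) by (intro measurable_restrict measurable_component_singleton) auto
  have d: "distr (PiM I (\<lambda>_. P)) (PiM J (\<lambda>_. P)) (\<lambda>z. \<lambda>j\<in>J. z (f j)) = PiM J (\<lambda>_. P)"
    using distr_PiM_reindex[of I "\<lambda>_. P" f J] P f by simp
  show ?thesis
    using integral_distr[OF m G] d by simp
qed

lemma indep_coords:
  assumes P: "prob_space P" and ne: "I \<noteq> {}"
  shows "prob_space.indep_vars (PiM I (\<lambda>_. P)) (\<lambda>_. P) (\<lambda>i z. z i) I"
proof -
  interpret pp: prob_space "PiM I (\<lambda>_. P)" by (rule prob_space_PiM) (use P in auto)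
  show ?thesis
  proof (subst pp.indep_vars_iff_distr_eq_PiM'[OF ne])
    show "(\<lambda>z. z i) \<in> measurable (PiM I (\<lambda>_. P)) P" if "i \<in> I" for i
      using that by (rule measurable_component_singleton)
    have "distr (PiM I (\<lambda>_. P)) (PiM I (\<lambda>_. P)) (\<lambda>x. \<lambda>i\<in>I. x i) = distr (PiM I (\<lambda>_. P)) (PiM I (\<lambda>_. P)) (\<lambda>x. x)"
      by (rule distr_cong) (auto simp: space_PiM PiE_restrict)
    also have "\<dots> = PiM I (\<lambda>_. P)" by simp
    also have "\<dots> = PiM I (\<lambda>i. distr (PiM I (\<lambda>_. P)) P (\<lambda>x. x i))"
      by (rule PiM_cong) (use distr_PiM_component[of I "\<lambda>_. P"] P in auto)
    finally show "distr (PiM I (\<lambda>_. P)) (PiM I (\<lambda>_. P)) (\<lambda>x. \<lambda>i\<in>I. x i) = PiM I (\<lambda>i. distr (PiM I (\<lambda>_. P)) P (\<lambda>x. x i))" .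
  qed
qed

lemma int_bdd:
  fixes f :: "'a \<Rightarrow> real"
  assumes "prob_space M" "f \<in> borel_measurable M" "\<And>x. \<bar>f x\<bar> \<le> B"
  shows "integrable M f"
proof -
  interpret prob_space M by fact
  show ?thesis using assms(2,3) by (intro integrable_const_bound[where B=B]) auto
qed

lemma abs_int_bdd:
  fixes f :: "'a \<Rightarrow> real"
  assumes "prob_space M" "f \<in> borel_measurable M" "\<And>x. \<bar>f x\<bar> \<le> B"
  shows "\<bar>integral\<^sup>L M f\<bar> \<le> B"
proof -
  interpret prob_space M by fact
  have i: "integrable M f" by (rule int_bdd[OF assms])
  have "AE x in M. f x \<le> B" "AE x in M. - B \<le> f x" using assms(3) by (auto simp: abs_le_iff intro!: AE_I2 simp del: minus_le_iff neg_le_iff_le, smt (verit) assms(3) abs_le_iff)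
  then have "integral\<^sup>L M f \<le> B" "- B \<le> integral\<^sup>L M f"
    using integral_le_const[OF i] integral_ge_const[OF i] by auto
  then show ?thesis by linarith
qed

lemma inj_nth1: "distinct xs \<Longrightarrow> length xs = m \<Longrightarrow> inj_on (\<lambda>j. xs ! (j - 1)) {1..m}"
  by (auto simp: inj_on_def nth_eq_iff_index_eq)

lemma nth1_in:
  assumes "length xs = m" "set xs \<subseteq> I" shows "(\<lambda>j. xs ! (j - 1)) \<in> {1..m} \<rightarrow> I"
proof
  fix j assume "j \<in> {1..m}"
  then have "j - 1 < length xs" using assms(1) by auto
  then show "xs ! (j - 1) \<in> I" using assms(2) nth_mem by blast
qed

locale hs =
  fixes P :: "('x \<times> 'y) measure" and k :: "'x \<Rightarrow> 'x \<Rightarrow> real" and l :: "'y \<Rightarrow> 'y \<Rightarrow> real"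
    and \<nu>k \<nu>l :: real
  assumes P: "prob_space P"
    and pdk: "pd_kernel k" and pdl: "pd_kernel l"
    and km: "(\<lambda>(a, b). k (fst a) (fst b)) \<in> borel_measurable (P \<Otimes>\<^sub>M P)"
    and lm: "(\<lambda>(a, b). l (snd a) (snd b)) \<in> borel_measurable (P \<Otimes>\<^sub>M P)"
    and bk: "\<forall>x. k x x \<le> \<nu>k" and bl: "\<forall>y. l y y \<le> \<nu>l"
begin

abbreviation "Om I \<equiv> PiM I (\<lambda>_. P)"

lemma probOm: "prob_space (Om I)"
  by (rule prob_space_PiM) (use P in auto)

lemma Hfb: "\<bar>Hf k l u0 u1 u2 u3\<bar> \<le> 8/3 * \<nu>k * \<nu>l"
  by (rule Hf_bound[OF pdk pdl bk bl])

lemma Hfm: "a \<in> I \<Longrightarrow> b \<in> I \<Longrightarrow> c \<in> I \<Longrightarrow> d \<in> I \<Longrightarrow>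
   (\<lambda>z. Hf k l (z a) (z b) (z c) (z d)) \<in> borel_measurable (Om I)"
  by (rule Hf_meas[OF km lm])

lemma HF: "distinct [i,j,q,r] \<Longrightarrow> H k l z i j q r = Hf k l (z i) (z j) (z q) (z r)"
  by (rule H_formula[OF pdk pdl])

lemma eta_alt: "eta P k l = (\<integral>w. Hf k l (w (1::nat)) (w 2) (w 3) (w 4) \<partial>Om {1..4})"
proof -
  have "eta P k l = (\<integral>w. Hf k l (w (1::nat)) (w 2) (w 3) (w 4) \<partial>Om {1..7})"
    unfolding eta_def by (rule Bochner_Integration.integral_cong[OF refl]) (simp add: HF)
  also have "\<dots> = (\<integral>w. (\<lambda>v. Hf k l (v 1) (v 2) (v 3) (v 4)) (\<lambda>j\<in>{1..4::nat}. w (id j)) \<partial>Om {1..7})"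
    by simp
  also have "\<dots> = (\<integral>w. Hf k l (w (1::nat)) (w 2) (w 3) (w 4) \<partial>Om {1..4})"
    by (rule int_reindex[OF P]) (auto intro!: Hfm)
  finally show ?thesis .
qed

lemma F1:
  assumes "t \<in> tuples n 4"
  shows "(\<integral>z. H k l z (t!0) (t!1) (t!2) (t!3) \<partial>Om {1..n}) = eta P k l"
proof -
  have t: "length t = 4" "distinct t" "set t \<subseteq> {1..n}" using assms by (auto simp: tuples_def)
  have d: "distinct [t!0, t!1, t!2, t!3]" using t by (simp add: nth_eq_iff_index_eq)
  have "(\<integral>z. H k l z (t!0) (t!1) (t!2) (t!3) \<partial>Om {1..n})
      = (\<integral>z. (\<lambda>v. Hf k l (v 1) (v 2) (v 3) (v 4)) (\<lambda>j\<in>{1..4}. z (t ! (j - 1))) \<partial>Om {1..n})"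
    by (rule Bochner_Integration.integral_cong[OF refl]) (use HF[OF d] in simp)
  also have "\<dots> = (\<integral>w. Hf k l (w (1::nat)) (w 2) (w 3) (w 4) \<partial>Om {1..4})"
    by (rule int_reindex[OF P inj_nth1[OF t(2,1)] nth1_in[OF t(1,3)]]) (auto intro!: Hfm)
  finally show ?thesis using eta_alt by simp
qed


lemma Hm: "distinct [a,b,c,d] \<Longrightarrow> {a,b,c,d} \<subseteq> I \<Longrightarrow> (\<lambda>z. H k l z a b c d) \<in> borel_measurable (Om I)"
  by (subst measurable_cong[where g="\<lambda>z. Hf k l (z a) (z b) (z c) (z d)"]) (auto simp: HF intro!: Hfm)

lemma Hb: "distinct [a,b,c,d] \<Longrightarrow> \<bar>H k l z a b c d\<bar> \<le> 8/3 * \<nu>k * \<nu>l"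
  using Hfb by (simp add: HF)

lemma list4: "length t = 4 \<Longrightarrow> \<exists>a b c d. t = [a,b,c,d]"
  by (cases t; cases "tl t"; cases "tl (tl t)"; cases "tl (tl (tl t))"; cases "tl (tl (tl (tl t)))") auto

lemma list3: "length t = 3 \<Longrightarrow> \<exists>a b c. t = [a,b,c]"
  by (cases t; cases "tl t"; cases "tl (tl t)"; cases "tl (tl (tl t))") auto

lemma tup4:
  assumes "t \<in> tuples n 4"
  shows "distinct [t!0, t!1, t!2, t!3]" "{t!0, t!1, t!2, t!3} \<subseteq> {1..n}" "set t = {t!0, t!1, t!2, t!3}"
proof -
  have t: "length t = 4" "distinct t" "set t \<subseteq> {1..n}" using assms by (auto simp: tuples_def)
  then obtain a b c d where "t = [a,b,c,d]"
    using list4[OF t(1)] by blast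
  then show "distinct [t!0, t!1, t!2, t!3]" "{t!0, t!1, t!2, t!3} \<subseteq> {1..n}" "set t = {t!0, t!1, t!2, t!3}"
    using t by auto
qed

lemma tup3:
  assumes "s \<in> tuples n 3"
  shows "distinct [s!0, s!1, s!2]" "{s!0, s!1, s!2} \<subseteq> {1..n}" "set s = {s!0, s!1, s!2}"
proof -
  have t: "length s = 3" "distinct s" "set s \<subseteq> {1..n}" using assms by (auto simp: tuples_def)
  then obtain a b c where "s = [a,b,c]"
    using list3[OF t(1)] by blast
  then show "distinct [s!0, s!1, s!2]" "{s!0, s!1, s!2} \<subseteq> {1..n}" "set s = {s!0, s!1, s!2}"
    using t by auto
qed

lemma F2:
  assumes t: "t \<in> tuples n 4" and s: "s \<in> tuples n 3" and disj: "set s \<inter> set t = {}"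
  shows "(\<integral>z. H k l z (t!0) (t!1) (t!2) (t!3) * H k l z (t!0) (s!0) (s!1) (s!2) \<partial>Om {1..n})
       = (\<integral>z. H k l z 1 2 3 4 * H k l z 1 5 6 7 \<partial>Om {1..7})"
proof -
  have tt: "length t = 4" "distinct t" "set t \<subseteq> {1..n}" using t by (auto simp: tuples_def)
  have ss: "length s = 3" "distinct s" "set s \<subseteq> {1..n}" using s by (auto simp: tuples_def)
  define xs where "xs = t @ s"
  have x: "length xs = 7" "distinct xs" "set xs \<subseteq> {1..n}" using tt ss disj by (auto simp: xs_def)
  have d1: "distinct [t!0, t!1, t!2, t!3]" using tup4[OF t] by simp
  have d2: "distinct [t!0, s!0, s!1, s!2]" using tup3[OF s] tup4[OF t] disj by auto
  let ?G = "\<lambda>v. Hf k l (v 1) (v 2) (v 3) (v 4) * Hf k l (v (1::nat)) (v 5) (v 6) (v 7)"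
  have xe: "xs!0 = t!0" "xs!1 = t!1" "xs!2 = t!2" "xs!3 = t!3" "xs!4 = s!0" "xs!5 = s!1" "xs!6 = s!2"
    using tt by (auto simp: xs_def nth_append)
  have "(\<integral>z. H k l z (t!0) (t!1) (t!2) (t!3) * H k l z (t!0) (s!0) (s!1) (s!2) \<partial>Om {1..n})
      = (\<integral>z. ?G (\<lambda>j\<in>{1..7}. z (xs ! (j - 1))) \<partial>Om {1..n})"
    by (rule Bochner_Integration.integral_cong[OF refl]) (use HF[OF d1] HF[OF d2] xe in simp)
  also have "\<dots> = (\<integral>w. ?G w \<partial>Om {1..7})"
    by (rule int_reindex[OF P inj_nth1[OF x(2,1)] nth1_in[OF x(1,3)]])
       (auto intro!: Hfm borel_measurable_times)
  also have "\<dots> = (\<integral>z. H k l z 1 2 3 4 * H k l z 1 5 6 7 \<partial>Om {1..7})"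
    by (rule Bochner_Integration.integral_cong[OF refl]) (simp add: HF)
  finally show ?thesis .
qed

lemma F3:
  assumes t: "t \<in> tuples n 4" and t': "t' \<in> tuples n 4" and disj: "set t \<inter> set t' = {}"
  shows "(\<integral>z. H k l z (t!0) (t!1) (t!2) (t!3) * H k l z (t'!0) (t'!1) (t'!2) (t'!3) \<partial>Om {1..n})
       = (eta P k l)^2"
proof -
  interpret pp: prob_space "Om {1..n}" by (rule probOm)
  have A: "set t \<subseteq> {1..n}" "set t' \<subseteq> {1..n}" using t t' by (auto simp: tuples_def)
  have ne: "{1..n} \<noteq> {}" using tup4(2)[OF t] by auto
  have ind: "pp.indep_var (Om (set t)) (\<lambda>\<omega>. restrict (\<lambda>i. \<omega> i) (set t)) (Om (set t')) (\<lambda>\<omega>. restrict (\<lambda>i. \<omega> i) (set t'))"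
    by (rule pp.indep_var_restrict[OF indep_coords[OF P ne] disj A])
  let ?GA = "\<lambda>v. Hf k l (v (t!0)) (v (t!1)) (v (t!2)) (v (t!3))"
  let ?GB = "\<lambda>v. Hf k l (v (t'!0)) (v (t'!1)) (v (t'!2)) (v (t'!3))"
  have mA: "?GA \<in> borel_measurable (Om (set t))" using tup4(3)[OF t] by (intro Hfm) auto
  have mB: "?GB \<in> borel_measurable (Om (set t'))" using tup4(3)[OF t'] by (intro Hfm) auto
  have ind2: "pp.indep_var borel (?GA \<circ> (\<lambda>\<omega>. restrict (\<lambda>i. \<omega> i) (set t))) borel (?GB \<circ> (\<lambda>\<omega>. restrict (\<lambda>i. \<omega> i) (set t')))"
    by (rule pp.indep_var_compose[OF ind mA mB])
  have eA: "(?GA \<circ> (\<lambda>\<omega>. restrict (\<lambda>i. \<omega> i) (set t))) = (\<lambda>z. H k l z (t!0) (t!1) (t!2) (t!3))"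
    using tup4(3)[OF t] HF[OF tup4(1)[OF t]] by (auto simp: fun_eq_iff)
  have eB: "(?GB \<circ> (\<lambda>\<omega>. restrict (\<lambda>i. \<omega> i) (set t'))) = (\<lambda>z. H k l z (t'!0) (t'!1) (t'!2) (t'!3))"
    using tup4(3)[OF t'] HF[OF tup4(1)[OF t']] by (auto simp: fun_eq_iff)
  have ind3: "pp.indep_var borel (\<lambda>z. H k l z (t!0) (t!1) (t!2) (t!3)) borel (\<lambda>z. H k l z (t'!0) (t'!1) (t'!2) (t'!3))"
    using ind2 unfolding eA eB .
  have iA: "integrable (Om {1..n}) (\<lambda>z. H k l z (t!0) (t!1) (t!2) (t!3))"
    by (rule int_bdd[OF probOm Hm[OF tup4(1,2)[OF t]] Hb[OF tup4(1)[OF t]]])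
  have iB: "integrable (Om {1..n}) (\<lambda>z. H k l z (t'!0) (t'!1) (t'!2) (t'!3))"
    by (rule int_bdd[OF probOm Hm[OF tup4(1,2)[OF t']] Hb[OF tup4(1)[OF t']]])
  show ?thesis
    using pp.indep_var_lebesgue_integral[OF ind3 iA iB] F1[OF t] F1[OF t'] by (simp add: power2_eq_square)
qed
end

lemma prod3: "(m::nat) \<ge> 3 \<Longrightarrow> \<Prod>{m - 3 + 1..m} = m * (m - 1) * (m - 2)"
proof -
  assume "m \<ge> 3"
  then obtain j where j: "m = j + 3" using le_Suc_ex[of 3 m] by (auto simp: add.commute)
  have "{j + 1..j + 3} = {j+1, j+2, j+3}" by auto
  then show ?thesis using j by simp
qed

lemma prod4: "(m::nat) \<ge> 4 \<Longrightarrow> \<Prod>{m - 4 + 1..m} = m * (m - 1) * (m - 2) * (m - 3)"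
proof -
  assume "m \<ge> 4"
  then obtain j where j: "m = j + 4" using le_Suc_ex[of 4 m] by (auto simp: add.commute)
  have "{j + 1..j + 4} = {j+1, j+2, j+3, j+4}" by auto
  then show ?thesis using j by (simp add: algebra_simps)
qed

lemma few_lists:
  assumes "finite A" "card A < k"
  shows "{xs. length xs = k \<and> distinct xs \<and> set xs \<subseteq> A} = {}"
proof (rule ccontr)
  assume "\<not> ?thesis"
  then obtain xs where "length xs = k" "distinct xs" "set xs \<subseteq> A" by auto
  then have "k \<le> card A" using card_mono[OF assms(1)] distinct_card by metis
  then show False using assms(2) by simp
qed

lemma cnt3:
  assumes "finite A"
  shows "real (card {xs. length xs = 3 \<and> distinct xs \<and> set xs \<subseteq> A}) = real (card A) * (real (card A) - 1) * (real (card A) - 2)"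
proof (cases "card A \<ge> 3")
  case True
  then show ?thesis using card_lists_distinct_length_eq[OF assms True] prod3[OF True] True
    by (simp add: of_nat_diff)
next
  case False
  then have c: "card A = 0 \<or> card A = 1 \<or> card A = 2" by auto
  have "{xs. length xs = 3 \<and> distinct xs \<and> set xs \<subseteq> A} = {}" (is "?X = _") using few_lists[OF assms, of 3] False by simp
  then have "card ?X = 0" by (simp only: card.empty)
  then show ?thesis using c by auto
qed

lemma cnt4:
  assumes "finite A"
  shows "real (card {xs. length xs = 4 \<and> distinct xs \<and> set xs \<subseteq> A}) = real (card A) * (real (card A) - 1) * (real (card A) - 2) * (real (card A) - 3)"
proof (cases "card A \<ge> 4")
  case True
  then show ?thesis using card_lists_distinct_length_eq[OF assms True] prod4[OF True] True
    by (simp add: of_nat_diff)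
next
  case False
  then have c: "card A = 0 \<or> card A = 1 \<or> card A = 2 \<or> card A = 3" by auto
  have "{xs. length xs = 4 \<and> distinct xs \<and> set xs \<subseteq> A} = {}" (is "?X = _") using few_lists[OF assms, of 4] False by simp
  then have "card ?X = 0" by (simp only: card.empty)
  then show ?thesis using c by auto
qed

lemma falling4: "n \<ge> 4 \<Longrightarrow> falling n 4 = real n * (real n - 1) * (real n - 2) * (real n - 3)"
proof -
  assume "n \<ge> 4"
  then obtain j where j: "n = Suc (Suc (Suc (Suc j)))" using le_Suc_ex[of 4 n] by (auto simp: numeral_eq_Suc)
  show ?thesis unfolding falling_def j by (simp add: field_simps)
qed

lemma falling3: "n \<ge> 4 \<Longrightarrow> falling (n - 1) 3 = (real n - 1) * (real n - 2) * (real n - 3)"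
proof -
  assume "n \<ge> 4"
  then obtain j where j: "n = Suc (Suc (Suc (Suc j)))" using le_Suc_ex[of 4 n] by (auto simp: numeral_eq_Suc)
  show ?thesis unfolding falling_def j by (simp add: field_simps)
qed

lemma card_T: "n \<ge> 4 \<Longrightarrow> real (card (tuples n 4)) = falling n 4"
  using cnt4[of "{1..n}"] falling4 by (simp add: tuples_def)

lemma card_S:
  assumes "n \<ge> 4" "i \<in> {1..n}"
  shows "real (card {s\<in>tuples n 3. i \<notin> set s}) = falling (n - 1) 3"
proof -
  have "{s\<in>tuples n 3. i \<notin> set s} = {xs. length xs = 3 \<and> distinct xs \<and> set xs \<subseteq> {1..n} - {i}}"
    by (auto simp: tuples_def)
  moreover have "card ({1..n} - {i}) = n - 1" using assms by simp
  ultimately show ?thesis using cnt3[of "{1..n} - {i}"] falling3[OF assms(1)] assms(1) by (simp add: of_nat_diff)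
qed

lemma card_D:
  assumes "n \<ge> 4" "t \<in> tuples n 4"
  shows "real (card {s\<in>tuples n 3. set s \<inter> set t = {}}) = (real n - 4) * (real n - 5) * (real n - 6)"
proof -
  have "{s\<in>tuples n 3. set s \<inter> set t = {}} = {xs. length xs = 3 \<and> distinct xs \<and> set xs \<subseteq> {1..n} - set t}"
    by (auto simp: tuples_def)
  moreover have "card ({1..n} - set t) = n - 4" using assms
    by (subst card_Diff_subset) (auto simp: tuples_def distinct_card)
  ultimately show ?thesis using cnt3[of "{1..n} - set t"] assms(1) by (simp add: of_nat_diff algebra_simps)
qed

lemma card_E:
  assumes "n \<ge> 4" "t \<in> tuples n 4"
  shows "real (card {s\<in>tuples n 4. set t \<inter> set s = {}}) = (real n - 4) * (real n - 5) * (real n - 6) * (real n - 7)"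
proof -
  have "{s\<in>tuples n 4. set t \<inter> set s = {}} = {xs. length xs = 4 \<and> distinct xs \<and> set xs \<subseteq> {1..n} - set t}"
    by (auto simp: tuples_def)
  moreover have "card ({1..n} - set t) = n - 4" using assms
    by (subst card_Diff_subset) (auto simp: tuples_def distinct_card)
  ultimately show ?thesis using cnt4[of "{1..n} - set t"] assms(1) by (simp add: of_nat_diff algebra_simps)
qed

lemma finite_tuples: "finite (tuples n k)"
proof -
  have "tuples n k \<subseteq> {xs. set xs \<subseteq> {1..n} \<and> length xs = k}" by (auto simp: tuples_def)
  moreover have "finite {xs. set xs \<subseteq> {1..n} \<and> length xs = k}" by (rule finite_lists_length_eq) simp
  ultimately show ?thesis by (rule finite_subset)
qed

lemma numeric:
  fixes a :: real
  assumes "a \<ge> 4"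
  shows "a * (2 * (((a-1)*(a-2)*(a-3) - (a-4)*(a-5)*(a-6)) / ((a-1)*(a-2)*(a-3)))
            + (a*(a-1)*(a-2)*(a-3) - (a-4)*(a-5)*(a-6)*(a-7)) / (a*(a-1)*(a-2)*(a-3))) \<le> 34"
proof -
  have p3: "(a-1)*(a-2)*(a-3) > 0" using assms by (intro mult_pos_pos) auto
  have p4: "a*(a-1)*(a-2)*(a-3) > 0" using assms by (intro mult_pos_pos) auto
  have e1: "a * ((a-1)*(a-2)*(a-3) - (a-4)*(a-5)*(a-6)) = 9 * ((a-1)*(a-2)*(a-3)) - (9*a^2 - 15*a - 54)"
    by (simp add: algebra_simps power2_eq_square)
  have e2: "a * (a*(a-1)*(a-2)*(a-3) - (a-4)*(a-5)*(a-6)*(a-7)) = 16 * (a*(a-1)*(a-2)*(a-3)) - a * (24*(3*a^2 - 19*a + 31))"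
    by (simp add: algebra_simps power2_eq_square)
  have q1: "9*a^2 - 15*a - 54 \<ge> 0"
  proof -
    have "9*a^2 - 15*a - 54 = (a-4)*(9*a+21) + 30" by (simp add: algebra_simps power2_eq_square)
    also have "\<dots> \<ge> 0" using assms by (intro add_nonneg_nonneg mult_nonneg_nonneg) auto
    finally show ?thesis .
  qed
  have q2: "a * (24*(3*a^2 - 19*a + 31)) \<ge> 0"
  proof -
    have "3*a^2 - 19*a + 31 = 3 * (a - 19/6)^2 + 11/12" by (simp add: algebra_simps power2_eq_square)
    also have "\<dots> \<ge> 0" by simp
    finally show ?thesis using assms by simp
  qed
  have r1: "a * (((a-1)*(a-2)*(a-3) - (a-4)*(a-5)*(a-6)) / ((a-1)*(a-2)*(a-3))) \<le> 9"
    using p3 e1 q1 by (simp add: divide_le_eq)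
  have r2: "a * ((a*(a-1)*(a-2)*(a-3) - (a-4)*(a-5)*(a-6)*(a-7)) / (a*(a-1)*(a-2)*(a-3))) \<le> 16"
  proof -
    have "a * ((a*(a-1)*(a-2)*(a-3) - (a-4)*(a-5)*(a-6)*(a-7)) / (a*(a-1)*(a-2)*(a-3)))
       = (a * (a*(a-1)*(a-2)*(a-3) - (a-4)*(a-5)*(a-6)*(a-7))) / (a*(a-1)*(a-2)*(a-3))" by simp
    also have "\<dots> \<le> 16" using p4 e2 q2 by (simp only: divide_le_eq) simp
    finally show ?thesis .
  qed
  have dl: "a * (2 * u + v) = 2 * (a * u) + a * v" for u v by (simp add: algebra_simps)
  show ?thesis using r1 r2 dl[of "((a-1)*(a-2)*(a-3) - (a-4)*(a-5)*(a-6)) / ((a-1)*(a-2)*(a-3))"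
     "(a*(a-1)*(a-2)*(a-3) - (a-4)*(a-5)*(a-6)*(a-7)) / (a*(a-1)*(a-2)*(a-3))"] by linarith
qed

context hs
begin

lemma nonneg_nu: "0 \<le> \<nu>k" "0 \<le> \<nu>l"
  using pd_diag[OF pdk] bk pd_diag[OF pdl] bl by (meson order_trans)+

lemma main:
  assumes n: "n \<ge> 4"
  shows "\<bar>(\<integral>z. sigma2_hat k l n z \<partial>Om {1..n}) - sigma2 P k l\<bar> \<le> 4608 * \<nu>k\<^sup>2 * \<nu>l\<^sup>2 / real n"
proof -
  interpret pp: prob_space "Om {1..n}" by (rule probOm)
  define T where "T = tuples n 4"
  define S where "S = (\<lambda>t::nat list. {s\<in>tuples n 3. t!0 \<notin> set s})"
  define D where "D = (\<lambda>t::nat list. {s\<in>tuples n 3. set s \<inter> set t = {}})"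
  define E where "E = (\<lambda>t::nat list. {s\<in>tuples n 4. set t \<inter> set s = {}})"
  define h where "h = (\<lambda>(t::nat list) z. H k l z (t!0) (t!1) (t!2) (t!3))"
  define g where "g = (\<lambda>(t::nat list) (s::nat list) z. H k l z (t!0) (s!0) (s!1) (s!2))"
  define N4 where "N4 = falling n 4"
  define N3 where "N3 = falling (n-1) 3"
  define B where "B = 8/3 * \<nu>k * \<nu>l"
  define A where "A = (\<integral>z. H k l z 1 2 3 4 * H k l z 1 5 6 7 \<partial>Om {1..7})"
  define \<eta> where "\<eta> = eta P k l"
  define a where "a = real n"
  have a4: "a \<ge> 4" using n by (simp add: a_def)
  have B0: "B \<ge> 0" using nonneg_nu by (simp add: B_def)
  have fT: "finite T" by (simp add: T_def finite_tuples)
  have fS: "finite (S t)" for t by (simp add: S_def finite_tuples)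
  have cT: "real (card T) = N4" using card_T[OF n] by (simp add: T_def N4_def)
  have cS: "real (card (S t)) = N3" if "t \<in> T" for t
    using card_S[OF n, of "t!0"] tup4(2)[of t n] that by (simp add: S_def N3_def T_def)
  have N4v: "N4 = a*(a-1)*(a-2)*(a-3)" using falling4[OF n] by (simp add: N4_def a_def)
  have N3v: "N3 = (a-1)*(a-2)*(a-3)" using falling3[OF n] by (simp add: N3_def a_def)
  have N4p: "N4 > 0" unfolding N4v using a4 by (intro mult_pos_pos) auto
  have N3p: "N3 > 0" unfolding N3v using a4 by (intro mult_pos_pos) auto
  have DS: "D t \<subseteq> S t" if "t \<in> T" for t
    using that tup4(3)[of t n] by (auto simp: D_def S_def T_def)
  have ET: "E t \<subseteq> T" for t by (auto simp: E_def T_def)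
  have cD: "real (card (D t)) = (a-4)*(a-5)*(a-6)" if "t \<in> T" for t
    using card_D[OF n, of t] that by (simp add: D_def T_def a_def)
  have cE: "real (card (E t)) = (a-4)*(a-5)*(a-6)*(a-7)" if "t \<in> T" for t
    using card_E[OF n, of t] that by (simp add: E_def T_def a_def)
  have dS: "distinct [t!0, s!0, s!1, s!2] \<and> {t!0, s!0, s!1, s!2} \<subseteq> {1..n}" if "t \<in> T" "s \<in> S t" for t s
    using that tup3[of s n] tup4[of t n] by (auto simp: S_def T_def)
  have hm: "h t \<in> borel_measurable (Om {1..n})" if "t \<in> T" for t
    unfolding h_def using that tup4[of t n] by (auto simp: T_def intro!: Hm)
  have hb: "\<bar>h t z\<bar> \<le> B" if "t \<in> T" for t z
    unfolding h_def B_def using that by (intro Hb tup4(1)) (simp add: T_def)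
  have gm: "g t s \<in> borel_measurable (Om {1..n})" if "t \<in> T" "s \<in> S t" for t s
    unfolding g_def using dS[OF that] by (auto intro!: Hm)
  have gb: "\<bar>g t s z\<bar> \<le> B" if "t \<in> T" "s \<in> S t" for t s z
    unfolding g_def B_def by (intro Hb) (use dS[OF that] in blast)
  have prodb: "\<bar>u * v\<bar> \<le> B * B" if "\<bar>u\<bar> \<le> B" "\<bar>v\<bar> \<le> B" for u v :: real
    using that by (simp add: abs_mult mult_mono')
  have ih: "integrable (Om {1..n}) (h t)" if "t \<in> T" for t
    by (rule int_bdd[OF probOm hm[OF that] hb[OF that]])
  have ihh: "integrable (Om {1..n}) (\<lambda>z. h t z * h t' z)" if "t \<in> T" "t' \<in> T" for t t'
    by (rule int_bdd[OF probOm]) (use hm[OF that(1)] hm[OF that(2)] prodb hb[OF that(1)] hb[OF that(2)] in auto)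
  have ihg: "integrable (Om {1..n}) (\<lambda>z. h t z * g t s z)" if "t \<in> T" "s \<in> S t" for t s
    by (rule int_bdd[OF probOm]) (use hm[OF that(1)] gm[OF that] prodb hb[OF that(1)] gb[OF that] in auto)
  have bhh: "\<bar>\<integral>z. h t z * h t' z \<partial>Om {1..n}\<bar> \<le> B * B" if "t \<in> T" "t' \<in> T" for t t'
    by (rule abs_int_bdd[OF probOm]) (use hm[OF that(1)] hm[OF that(2)] prodb hb[OF that(1)] hb[OF that(2)] in auto)
  have bhg: "\<bar>\<integral>z. h t z * g t s z \<partial>Om {1..n}\<bar> \<le> B * B" if "t \<in> T" "s \<in> S t" for t s
    by (rule abs_int_bdd[OF probOm]) (use hm[OF that(1)] gm[OF that] prodb hb[OF that(1)] gb[OF that] in auto)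
  have bA0: "\<bar>H k l z 1 2 3 4 * H k l z 1 5 6 7\<bar> \<le> B * B" for z
    by (rule prodb) (unfold B_def, (rule Hb, simp)+)
  have bA: "\<bar>A\<bar> \<le> B * B"
    unfolding A_def
    by (rule abs_int_bdd[OF probOm _ bA0]) (auto intro!: Hm borel_measurable_times)
  have V1: "(\<integral>z. h t z * g t s z \<partial>Om {1..n}) = A" if "t \<in> T" "s \<in> D t" for t s
    using F2[of t n s] that unfolding h_def g_def A_def by (auto simp: T_def D_def)
  have V2: "(\<integral>z. h t z * h t' z \<partial>Om {1..n}) = \<eta>^2" if "t \<in> T" "t' \<in> E t" for t t'
    using F3[of t n t'] that unfolding h_def \<eta>_def by (auto simp: T_def E_def)
  have V3: "(\<integral>z. h t z \<partial>Om {1..n}) = \<eta>" if "t \<in> T" for t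
    using F1[of t n] that unfolding h_def \<eta>_def by (auto simp: T_def)
  have eh: "eta_hat k l n z = (1/N4) * (\<Sum>t\<in>T. h t z)" for z
    by (simp add: eta_hat_def T_def h_def N4_def)
  have sh: "sigma2_hat k l n z = 16 * ((1/(N4*N3)) * (\<Sum>t\<in>T. \<Sum>s\<in>S t. h t z * g t s z) - (eta_hat k l n z)^2)" for z
    by (simp add: sigma2_hat_def T_def S_def h_def g_def N4_def N3_def)
  have ehsq: "(eta_hat k l n z)^2 = (1/N4^2) * (\<Sum>t\<in>T. \<Sum>t'\<in>T. h t z * h t' z)" for z
    unfolding eh by (simp add: power2_eq_square sum_product)
  define F1s where "F1s = (\<Sum>t\<in>T. \<Sum>s\<in>S t. \<integral>z. h t z * g t s z \<partial>Om {1..n})"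
  define F2s where "F2s = (\<Sum>t\<in>T. \<Sum>t'\<in>T. \<integral>z. h t z * h t' z \<partial>Om {1..n})"
  have iS: "integrable (Om {1..n}) (\<lambda>z. \<Sum>s\<in>S t. h t z * g t s z)" if "t \<in> T" for t
    by (rule Bochner_Integration.integrable_sum[where I="S t"]) (rule ihg[OF that])
  have iT: "integrable (Om {1..n}) (\<lambda>z. \<Sum>t'\<in>T. h t z * h t' z)" if "t \<in> T" for t
    by (rule Bochner_Integration.integrable_sum[where I="T"]) (rule ihh[OF that])
  have iF1: "integrable (Om {1..n}) (\<lambda>z. \<Sum>t\<in>T. \<Sum>s\<in>S t. h t z * g t s z)"
    by (rule Bochner_Integration.integrable_sum[where I=T]) (rule iS)
  have iF2: "integrable (Om {1..n}) (\<lambda>z. \<Sum>t\<in>T. \<Sum>t'\<in>T. h t z * h t' z)"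
    by (rule Bochner_Integration.integrable_sum[where I=T]) (rule iT)
  have iU: "integrable (Om {1..n}) (\<lambda>z. \<Sum>t\<in>T. h t z)"
    by (rule Bochner_Integration.integrable_sum[where I=T]) (rule ih)
  have IF1: "(\<integral>z. (\<Sum>t\<in>T. \<Sum>s\<in>S t. h t z * g t s z) \<partial>Om {1..n}) = F1s"
  proof -
    have "(\<integral>z. (\<Sum>t\<in>T. \<Sum>s\<in>S t. h t z * g t s z) \<partial>Om {1..n}) = (\<Sum>t\<in>T. \<integral>z. (\<Sum>s\<in>S t. h t z * g t s z) \<partial>Om {1..n})"
      by (rule Bochner_Integration.integral_sum[where I=T]) (rule iS)
    also have "\<dots> = F1s" unfolding F1s_def
      by (rule sum.cong[OF refl], rule Bochner_Integration.integral_sum) (rule ihg)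
    finally show ?thesis .
  qed
  have IF2: "(\<integral>z. (\<Sum>t\<in>T. \<Sum>t'\<in>T. h t z * h t' z) \<partial>Om {1..n}) = F2s"
  proof -
    have "(\<integral>z. (\<Sum>t\<in>T. \<Sum>t'\<in>T. h t z * h t' z) \<partial>Om {1..n}) = (\<Sum>t\<in>T. \<integral>z. (\<Sum>t'\<in>T. h t z * h t' z) \<partial>Om {1..n})"
      by (rule Bochner_Integration.integral_sum[where I=T]) (rule iT)
    also have "\<dots> = F2s" unfolding F2s_def
      by (rule sum.cong[OF refl], rule Bochner_Integration.integral_sum) (rule ihh)
    finally show ?thesis .
  qed
  have IU: "(\<integral>z. (\<Sum>t\<in>T. h t z) \<partial>Om {1..n}) = N4 * \<eta>"
  proof -
    have "(\<integral>z. (\<Sum>t\<in>T. h t z) \<partial>Om {1..n}) = (\<Sum>t\<in>T. \<integral>z. h t z \<partial>Om {1..n})"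
      by (rule Bochner_Integration.integral_sum[where I=T]) (rule ih)
    also have "\<dots> = (\<Sum>t\<in>T. \<eta>)" by (rule sum.cong[OF refl]) (rule V3)
    also have "\<dots> = N4 * \<eta>" using cT by simp
    finally show ?thesis .
  qed
  have ES: "(\<integral>z. sigma2_hat k l n z \<partial>Om {1..n}) = 16 * ((1/(N4*N3)) * F1s - (1/N4^2) * F2s)"
  proof -
    have "(\<integral>z. sigma2_hat k l n z \<partial>Om {1..n}) = (\<integral>z. 16 * ((1/(N4*N3)) * (\<Sum>t\<in>T. \<Sum>s\<in>S t. h t z * g t s z) - (1/N4^2) * (\<Sum>t\<in>T. \<Sum>t'\<in>T. h t z * h t' z)) \<partial>Om {1..n})"
      by (rule Bochner_Integration.integral_cong[OF refl]) (simp only: sh ehsq)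
    also have "\<dots> = 16 * ((\<integral>z. (1/(N4*N3)) * (\<Sum>t\<in>T. \<Sum>s\<in>S t. h t z * g t s z) \<partial>Om {1..n}) - (\<integral>z. (1/N4^2) * (\<Sum>t\<in>T. \<Sum>t'\<in>T. h t z * h t' z) \<partial>Om {1..n}))"
    proof -
      have iX: "integrable (Om {1..n}) (\<lambda>z. (1/(N4*N3)) * (\<Sum>t\<in>T. \<Sum>s\<in>S t. h t z * g t s z))"
        by (rule Bochner_Integration.integrable_mult_right[OF iF1])
      have iY: "integrable (Om {1..n}) (\<lambda>z. (1/N4^2) * (\<Sum>t\<in>T. \<Sum>t'\<in>T. h t z * h t' z))"
        by (rule Bochner_Integration.integrable_mult_right[OF iF2])
      show ?thesis
        by (simp only: integral_mult_right_zero Bochner_Integration.integral_diff[OF iX iY])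
    qed
    also have "\<dots> = 16 * ((1/(N4*N3)) * F1s - (1/N4^2) * F2s)"
      by (simp only: integral_mult_right_zero IF1 IF2)
    finally show ?thesis .
  qed
  have sig: "sigma2 P k l = 16 * (A - \<eta>^2)" by (simp add: sigma2_def A_def \<eta>_def)
  define D3 where "D3 = (a-4)*(a-5)*(a-6)"
  define D4 where "D4 = (a-4)*(a-5)*(a-6)*(a-7)"
  have cSD: "real (card (S t - D t)) = N3 - D3" if "t \<in> T" for t
  proof -
    have "card (S t - D t) = card (S t) - card (D t)" using DS[OF that] fS by (intro card_Diff_subset) (auto intro: finite_subset)
    moreover have "card (D t) \<le> card (S t)" using DS[OF that] fS by (intro card_mono) auto
    ultimately show ?thesis using cS[OF that] cD[OF that] by (simp add: of_nat_diff D3_def)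
  qed
  have cTE: "real (card (T - E t)) = N4 - D4" if "t \<in> T" for t
  proof -
    have "card (T - E t) = card T - card (E t)" using ET fT by (intro card_Diff_subset) (auto intro: finite_subset)
    moreover have "card (E t) \<le> card T" using ET fT by (intro card_mono) auto
    ultimately show ?thesis using cT cE[OF that] by (simp add: of_nat_diff D4_def)
  qed
  have split1: "F1s - N4 * N3 * A = (\<Sum>t\<in>T. \<Sum>s\<in>S t - D t. ((\<integral>z. h t z * g t s z \<partial>Om {1..n}) - A))"
  proof -
    have "(\<Sum>t\<in>T. \<Sum>s\<in>S t. A) = (\<Sum>t\<in>T. N3 * A)" by (rule sum.cong[OF refl]) (simp add: cS)
    also have "\<dots> = N4 * N3 * A" using cT by simp
    finally have sA: "(\<Sum>t\<in>T. \<Sum>s\<in>S t. A) = N4 * N3 * A" .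
    have "F1s - N4 * N3 * A = (\<Sum>t\<in>T. \<Sum>s\<in>S t. ((\<integral>z. h t z * g t s z \<partial>Om {1..n}) - A))"
      unfolding F1s_def sA[symmetric] by (simp add: sum_subtractf)
    also have "\<dots> = (\<Sum>t\<in>T. \<Sum>s\<in>S t - D t. ((\<integral>z. h t z * g t s z \<partial>Om {1..n}) - A))"
    proof (rule sum.cong[OF refl])
      fix t assume t: "t \<in> T"
      have "(\<Sum>s\<in>S t. ((\<integral>z. h t z * g t s z \<partial>Om {1..n}) - A)) =
            (\<Sum>s\<in>S t - D t. ((\<integral>z. h t z * g t s z \<partial>Om {1..n}) - A)) + (\<Sum>s\<in>D t. ((\<integral>z. h t z * g t s z \<partial>Om {1..n}) - A))"
        by (rule sum.subset_diff[OF DS[OF t] fS])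
      also have "(\<Sum>s\<in>D t. ((\<integral>z. h t z * g t s z \<partial>Om {1..n}) - A)) = 0"
        using V1[OF t] by simp
      finally show "(\<Sum>s\<in>S t. ((\<integral>z. h t z * g t s z \<partial>Om {1..n}) - A)) =
            (\<Sum>s\<in>S t - D t. ((\<integral>z. h t z * g t s z \<partial>Om {1..n}) - A))" by simp
    qed
    finally show ?thesis .
  qed
  have bnd1: "\<bar>F1s - N4 * N3 * A\<bar> \<le> N4 * (N3 - D3) * (2 * (B * B))"
  proof -
    have "\<bar>F1s - N4 * N3 * A\<bar> \<le> (\<Sum>t\<in>T. \<Sum>s\<in>S t - D t. \<bar>(\<integral>z. h t z * g t s z \<partial>Om {1..n}) - A\<bar>)"
      unfolding split1 by (rule order_trans[OF sum_abs], rule sum_mono, rule sum_abs)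
    also have "\<dots> \<le> (\<Sum>t\<in>T. \<Sum>s\<in>S t - D t. 2 * (B * B))"
    proof (rule sum_mono, rule sum_mono)
      fix t s assume t: "t \<in> T" and s: "s \<in> S t - D t"
      show "\<bar>(\<integral>z. h t z * g t s z \<partial>Om {1..n}) - A\<bar> \<le> 2 * (B * B)"
        using bhg[OF t, of s] s bA by auto
    qed
    also have "\<dots> = (\<Sum>t\<in>T. (N3 - D3) * (2 * (B * B)))"
      by (rule sum.cong[OF refl]) (simp add: cSD)
    also have "\<dots> = N4 * (N3 - D3) * (2 * (B * B))" using cT by simp
    finally show ?thesis .
  qed
  define X1 where "X1 = (1/(N4*N3)) * F1s - A"
  have X1e: "X1 = (F1s - N4 * N3 * A) / (N4 * N3)" unfolding X1_def using N4p N3p by (simp add: field_simps)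
  have bX1: "\<bar>X1\<bar> \<le> 2 * (B * B) * ((N3 - D3) / N3)"
  proof -
    have "\<bar>X1\<bar> = \<bar>F1s - N4 * N3 * A\<bar> / (N4 * N3)" unfolding X1e using N4p N3p by (simp add: abs_divide)
    also have "\<dots> \<le> N4 * (N3 - D3) * (2 * (B * B)) / (N4 * N3)"
      using bnd1 N4p N3p by (intro divide_right_mono) auto
    also have "\<dots> = 2 * (B * B) * ((N3 - D3) / N3)" using N4p N3p by (simp add: field_simps)
    finally show ?thesis .
  qed
  have split2: "F2s - N4 * N4 * \<eta>^2 = (\<Sum>t\<in>T. \<Sum>t'\<in>T - E t. ((\<integral>z. h t z * h t' z \<partial>Om {1..n}) - \<eta>^2))"
  proof -
    have sA: "(\<Sum>t\<in>T. \<Sum>t'\<in>T. \<eta>^2) = N4 * N4 * \<eta>^2" using cT by simp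
    have "F2s - N4 * N4 * \<eta>^2 = (\<Sum>t\<in>T. \<Sum>t'\<in>T. ((\<integral>z. h t z * h t' z \<partial>Om {1..n}) - \<eta>^2))"
      unfolding F2s_def sA[symmetric] by (simp add: sum_subtractf)
    also have "\<dots> = (\<Sum>t\<in>T. \<Sum>t'\<in>T - E t. ((\<integral>z. h t z * h t' z \<partial>Om {1..n}) - \<eta>^2))"
    proof (rule sum.cong[OF refl])
      fix t assume t: "t \<in> T"
      have "(\<Sum>t'\<in>T. ((\<integral>z. h t z * h t' z \<partial>Om {1..n}) - \<eta>^2)) =
            (\<Sum>t'\<in>T - E t. ((\<integral>z. h t z * h t' z \<partial>Om {1..n}) - \<eta>^2)) + (\<Sum>t'\<in>E t. ((\<integral>z. h t z * h t' z \<partial>Om {1..n}) - \<eta>^2))"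
        by (rule sum.subset_diff[OF ET fT])
      also have "(\<Sum>t'\<in>E t. ((\<integral>z. h t z * h t' z \<partial>Om {1..n}) - \<eta>^2)) = 0"
        using V2[OF t] by simp
      finally show "(\<Sum>t'\<in>T. ((\<integral>z. h t z * h t' z \<partial>Om {1..n}) - \<eta>^2)) =
            (\<Sum>t'\<in>T - E t. ((\<integral>z. h t z * h t' z \<partial>Om {1..n}) - \<eta>^2))" by simp
    qed
    finally show ?thesis .
  qed
  have bnd2: "F2s - N4 * N4 * \<eta>^2 \<le> N4 * (N4 - D4) * (B * B)"
  proof -
    have "F2s - N4 * N4 * \<eta>^2 \<le> (\<Sum>t\<in>T. \<Sum>t'\<in>T - E t. B * B)"
      unfolding split2
    proof (rule sum_mono, rule sum_mono)
      fix t t' assume t: "t \<in> T" and t': "t' \<in> T - E t"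
      have tT: "t' \<in> T" using t' by simp
      have "(\<integral>z. h t z * h t' z \<partial>Om {1..n}) \<le> B * B" using bhh[OF t tT] by (simp add: abs_le_iff)
      then show "(\<integral>z. h t z * h t' z \<partial>Om {1..n}) - \<eta>^2 \<le> B * B"
        using zero_le_power2[of \<eta>] by linarith
    qed
    also have "\<dots> = (\<Sum>t\<in>T. (N4 - D4) * (B * B))"
      by (rule sum.cong[OF refl]) (simp add: cTE)
    also have "\<dots> = N4 * (N4 - D4) * (B * B)" using cT by simp
    finally show ?thesis .
  qed
  define X2 where "X2 = (1/N4^2) * F2s - \<eta>^2"
  have X2e: "X2 = (F2s - N4 * N4 * \<eta>^2) / (N4 * N4)" unfolding X2_def using N4p by (simp add: field_simps power2_eq_square)
  have bX2: "X2 \<le> (B * B) * ((N4 - D4) / N4)"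
  proof -
    have "X2 \<le> N4 * (N4 - D4) * (B * B) / (N4 * N4)"
      unfolding X2e using bnd2 N4p by (intro divide_right_mono) auto
    also have "\<dots> = (B * B) * ((N4 - D4) / N4)" using N4p by (simp add: field_simps)
    finally show ?thesis .
  qed
  have X2nn: "0 \<le> X2"
  proof -
    let ?U = "\<lambda>z. (1/N4) * (\<Sum>t\<in>T. h t z)"
    let ?Y = "\<lambda>z. (1/N4^2) * (\<Sum>t\<in>T. \<Sum>t'\<in>T. h t z * h t' z)"
    have iUU: "integrable (Om {1..n}) ?U" by (rule Bochner_Integration.integrable_mult_right[OF iU])
    have iY: "integrable (Om {1..n}) ?Y" by (rule Bochner_Integration.integrable_mult_right[OF iF2])
    have pw: "(?U z - \<eta>)^2 = ?Y z - 2 * \<eta> * ?U z + \<eta>^2" for z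
      using ehsq[of z] eh[of z] by (simp add: power2_diff)
    have "0 \<le> (\<integral>z. (?U z - \<eta>)^2 \<partial>Om {1..n})" by (rule Bochner_Integration.integral_nonneg) simp
    also have "\<dots> = (\<integral>z. ?Y z - 2 * \<eta> * ?U z + \<eta>^2 \<partial>Om {1..n})" by (simp only: pw)
    also have "\<dots> = (\<integral>z. ?Y z \<partial>Om {1..n}) - 2 * \<eta> * (\<integral>z. ?U z \<partial>Om {1..n}) + \<eta>^2"
    proof -
      have i2: "integrable (Om {1..n}) (\<lambda>z. 2 * \<eta> * ?U z)" by (rule Bochner_Integration.integrable_mult_right[OF iUU])
      have i3: "integrable (Om {1..n}) (\<lambda>z. ?Y z - 2 * \<eta> * ?U z)" by (rule Bochner_Integration.integrable_diff[OF iY i2])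
      have "(\<integral>z. ?Y z - 2 * \<eta> * ?U z + \<eta>^2 \<partial>Om {1..n}) = (\<integral>z. ?Y z - 2 * \<eta> * ?U z \<partial>Om {1..n}) + (\<integral>z. \<eta>^2 \<partial>Om {1..n})"
        by (rule Bochner_Integration.integral_add[OF i3]) (rule pp.integrable_const)
      also have "(\<integral>z. ?Y z - 2 * \<eta> * ?U z \<partial>Om {1..n}) = (\<integral>z. ?Y z \<partial>Om {1..n}) - (\<integral>z. 2 * \<eta> * ?U z \<partial>Om {1..n})"
        by (rule Bochner_Integration.integral_diff[OF iY i2])
      also have "(\<integral>z. 2 * \<eta> * ?U z \<partial>Om {1..n}) = 2 * \<eta> * (\<integral>z. ?U z \<partial>Om {1..n})"
        by (rule integral_mult_right_zero)
      also have "(\<integral>z. \<eta>^2 \<partial>Om {1..n}) = \<eta>^2" using pp.prob_space by simp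
      finally show ?thesis .
    qed
    also have "\<dots> = X2"
    proof -
      have "(\<integral>z. ?U z \<partial>Om {1..n}) = \<eta>" using IU N4p by (simp only: integral_mult_right_zero) simp
      moreover have "(\<integral>z. ?Y z \<partial>Om {1..n}) = (1/N4^2) * F2s" using IF2 by (simp only: integral_mult_right_zero)
      ultimately show ?thesis unfolding X2_def by (simp add: power2_eq_square)
    qed
    finally show ?thesis .
  qed
  have diff: "(\<integral>z. sigma2_hat k l n z \<partial>Om {1..n}) - sigma2 P k l = 16 * (X1 - X2)"
    unfolding ES sig X1_def X2_def by (simp add: algebra_simps)
  define R where "R = 2 * ((N3 - D3) / N3) + (N4 - D4) / N4"
  have aR: "a * R \<le> 34" unfolding R_def N3v N4v D3_def D4_def using numeric[OF a4] by simp
  have apos: "a > 0" using a4 by simp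
  have "\<bar>(\<integral>z. sigma2_hat k l n z \<partial>Om {1..n}) - sigma2 P k l\<bar> \<le> 16 * ((B * B) * R)"
  proof -
    have "\<bar>X1 - X2\<bar> \<le> \<bar>X1\<bar> + X2" using X2nn by linarith
    also have "\<dots> \<le> (B * B) * R" using bX1 bX2 unfolding R_def by (simp add: algebra_simps)
    finally show ?thesis unfolding diff by (simp add: abs_mult)
  qed
  also have "\<dots> \<le> 16 * ((B * B) * (34 / a))"
  proof -
    have "R \<le> 34 / a" using aR apos by (simp add: le_divide_eq mult.commute)
    then show ?thesis by (intro mult_left_mono) auto
  qed
  also have "\<dots> = (34816 / 9) * \<nu>k\<^sup>2 * \<nu>l\<^sup>2 / real n"
    unfolding B_def a_def by (simp add: power2_eq_square field_simps)
  also have "\<dots> \<le> 4608 * \<nu>k\<^sup>2 * \<nu>l\<^sup>2 / real n"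
    using n by (intro divide_right_mono mult_right_mono) auto
  finally show ?thesis .
qed

end

theorem lemma9:
  fixes P :: "('x \<times> 'y) measure" and k :: "'x \<Rightarrow> 'x \<Rightarrow> real" and l :: "'y \<Rightarrow> 'y \<Rightarrow> real"
    and \<nu>k \<nu>l :: real and n :: nat
  assumes "prob_space P"
    and "n \<ge> 4"
    and "pd_kernel k" and "pd_kernel l"
    and "(\<lambda>(a, b). k (fst a) (fst b)) \<in> borel_measurable (P \<Otimes>\<^sub>M P)"
    and "(\<lambda>(a, b). l (snd a) (snd b)) \<in> borel_measurable (P \<Otimes>\<^sub>M P)"
    and "\<forall>x. k x x \<le> \<nu>k" and "\<forall>y. l y y \<le> \<nu>l"
  shows "\<bar>(\<integral>z. sigma2_hat k l n z \<partial>(PiM {1..n} (\<lambda>_. P))) - sigma2 P k l\<bar>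
           \<le> 4608 * \<nu>k\<^sup>2 * \<nu>l\<^sup>2 / real n"
proof -
  interpret hs P k l \<nu>k \<nu>l
    by (rule hs.intro[OF assms(1) assms(3) assms(4) assms(5) assms(6) assms(7) assms(8)])
  show ?thesis by (rule main[OF assms(2)])
qed

end
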